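(* Let $K$ be a field, $\nu$ a valuation on $K[x]$, and $\mathbf{Q}\subseteq K[x]$ a set of key polynomials for $\nu$. Then $\mathbf{Q}$ is a complete set for $\nu$ if and only if $\mathbf{Q}$ satisfies (GS1$^*$).
   Context: $\nu:K[x]\to\Gamma\cup\{\infty\}$ is a valuation ($\Gamma$ an ordered abelian group) with $\nu(f)=\infty$ only for $f=0$; $\Gamma'=\Gamma\otimes\mathbb{Q}$. For $k\in\mathbb{N}$, $\partial_k f=\frac{1}{k!}\frac{d^kf}{dx^k}$ (Hasse derivative). For nonconstant $f$, $\epsilon(f)=\max\{(\nu(f)-\nu(\partial_kf))/k\mid 1\le k\le\deg f\}\in\Gamma'$ (terms with $\partial_kf=0$ omitted). A key polynomial is a monic nonconstant $Q\in K[x]$ such that every nonconstant $f\in K[x]$ with $\epsilon(f)\ge\epsilon(Q)$ satisfies $\deg f\ge\deg Q$. For monic nonconstant $Q$, the $Q$-expansion of $f$ is the unique expression $f=f_0+f_1Q+\dots+f_nQ^n$ with each $f_i=0$ or $\deg f_i<\deg Q$, and $\nu_Q(f)=\min_i\nu(f_iQ^i)$. A set $\mathbf{Q}$ of monic nonconstant polynomials is complete for $\nu$ if for every nonconstant $f\in K[x]$ there is $Q\in\mathbf{Q}$ with $\deg Q\le\deg f$ and $\nu_Q(f)=\nu(f)$. For finitely supported $\lambda:\mathbf{Q}\to\mathbb{N}_0$ let $\mathbf{Q}^\lambda=\prod_{\lambda(Q)\neq0}Q^{\lambda(Q)}$. (GS1$^*$): for every $f\in K[x]$ there exist $r\ge0$,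 $a_1,\dots,a_r\in K$ and finitely supported $\lambda_1,\dots,\lambda_r:\mathbf{Q}\to\mathbb{N}_0$ with $f=\sum_{i=1}^ra_i\mathbf{Q}^{\lambda_i}$, $\nu(a_i\mathbf{Q}^{\lambda_i})\ge\nu(f)$ for all $i$, and $\deg Q\le\deg f$ whenever $\lambda_i(Q)\ne0$ for some $i$. *)

theory Defs
  imports "HOL-Computational_Algebra.Polynomial"
begin

text \<open>An element of \<Gamma> \<union> {\<infinity>} is represented as a value of type 'g option,
  with None standing for \<infinity>. The order and addition are extended as usual.\<close>

definition vle :: "'g::linordered_ab_group_add option \<Rightarrow> 'g option \<Rightarrow> bool" where
  "vle x y = (case y of None \<Rightarrow> True
                      | Some b \<Rightarrow> (case x of None \<Rightarrow> False | Some a \<Rightarrow> a \<le> b))"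

definition vadd :: "'g::linordered_ab_group_add option \<Rightarrow> 'g option \<Rightarrow> 'g option" where
  "vadd x y = (case x of None \<Rightarrow> None
                       | Some a \<Rightarrow> (case y of None \<Rightarrow> None | Some b \<Rightarrow> Some (a + b)))"

definition vmin :: "'g::linordered_ab_group_add option \<Rightarrow> 'g option \<Rightarrow> 'g option" where
  "vmin x y = (if vle x y then x else y)"

definition is_valuation :: "('a::field poly \<Rightarrow> 'g::linordered_ab_group_add option) \<Rightarrow> bool" where
  "is_valuation \<nu> \<longleftrightarrow>
     (\<forall>f. \<nu> f = None \<longleftrightarrow> f = 0) \<and>
     (\<forall>f g. \<nu> (f * g) = vadd (\<nu> f) (\<nu> g)) \<and>
     (\<forall>f g. vle (vmin (\<nu> f) (\<nu> g)) (\<nu> (f + g)))"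

text \<open>\<partial>_k f = (1/k!) d^k f / dx^k, written via its coefficients
  (which is the standard Hasse derivative, meaningful in any characteristic):
  \<partial>_k (\<Sum> a_i x^i) = \<Sum> (i choose k) a_i x^(i-k).\<close>

definition hasse_deriv :: "nat \<Rightarrow> 'a::field poly \<Rightarrow> 'a poly" where
  "hasse_deriv k f = (\<Sum>i\<le>degree f. monom (of_nat (i choose k) * coeff f i) (i - k))"

definition nsmul :: "nat \<Rightarrow> 'g::linordered_ab_group_add \<Rightarrow> 'g" where
  "nsmul n a = (\<Sum>_<n. a)"

text \<open>Elements of \<Gamma>' = \<Gamma> \<otimes> \<rat> are represented as formal fractions (a, m) = a/m
  with a \<in> \<Gamma>, m a positive natural; (a,m) \<le> (b,n) in \<Gamma>' iff n a \<le> m b in \<Gamma>.\<close>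
definition qle :: "'g::linordered_ab_group_add \<times> nat \<Rightarrow> 'g \<times> nat \<Rightarrow> bool" where
  "qle p q = (nsmul (snd q) (fst p) \<le> nsmul (snd p) (fst q))"

text \<open>The finite set of quantities (\<nu>(f) - \<nu>(\<partial>_k f))/k, 1 \<le> k \<le> deg f, \<partial>_k f \<noteq> 0,
  whose maximum is \<epsilon>(f).\<close>
definition eps_terms :: "('a::field poly \<Rightarrow> 'g::linordered_ab_group_add option) \<Rightarrow> 'a poly
    \<Rightarrow> ('g \<times> nat) set" where
  "eps_terms \<nu> f = {(the (\<nu> f) - the (\<nu> (hasse_deriv k f)), k) | k.
                      1 \<le> k \<and> k \<le> degree f \<and> hasse_deriv k f \<noteq> 0}"

text \<open>\<epsilon>(g) \<le> \<epsilon>(f) in \<Gamma>': the maximum of eps_terms f dominates every element of eps_terms g.\<close>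
definition eps_le :: "('a::field poly \<Rightarrow> 'g::linordered_ab_group_add option) \<Rightarrow> 'a poly \<Rightarrow> 'a poly \<Rightarrow> bool" where
  "eps_le \<nu> g f = (\<exists>p\<in>eps_terms \<nu> f. \<forall>q\<in>eps_terms \<nu> g. qle q p)"

definition key_polynomial :: "('a::field poly \<Rightarrow> 'g::linordered_ab_group_add option) \<Rightarrow> 'a poly \<Rightarrow> bool" where
  "key_polynomial \<nu> Q \<longleftrightarrow> lead_coeff Q = 1 \<and> degree Q \<ge> 1 \<and>
     (\<forall>f. degree f \<ge> 1 \<longrightarrow> eps_le \<nu> Q f \<longrightarrow> degree f \<ge> degree Q)"

text \<open>The i-th coefficient f_i of the Q-expansion f = \<Sum> f_i Q^i (deg f_i < deg Q).\<close>
definition qexp_coeff :: "'a::field poly \<Rightarrow> 'a poly \<Rightarrow> nat \<Rightarrow> 'a poly" where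
  "qexp_coeff Q f i = (f div Q ^ i) mod Q"

definition nu_Q :: "('a::field poly \<Rightarrow> 'g::linordered_ab_group_add option) \<Rightarrow> 'a poly \<Rightarrow> 'a poly \<Rightarrow> 'g option" where
  "nu_Q \<nu> Q f = (if {i. i \<le> degree f \<and> qexp_coeff Q f i \<noteq> 0} = {} then None
      else Some (Min {the (\<nu> (qexp_coeff Q f i * Q ^ i)) | i. i \<le> degree f \<and> qexp_coeff Q f i \<noteq> 0}))"

definition complete_set :: "('a::field poly \<Rightarrow> 'g::linordered_ab_group_add option) \<Rightarrow> 'a poly set \<Rightarrow> bool" where
  "complete_set \<nu> QS \<longleftrightarrow>
     (\<forall>f. degree f \<ge> 1 \<longrightarrow> (\<exists>Q\<in>QS. degree Q \<le> degree f \<and> nu_Q \<nu> Q f = \<nu> f))"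

definition Qpow :: "('a::field poly \<Rightarrow> nat) \<Rightarrow> 'a poly" where
  "Qpow lam = (\<Prod>Q\<in>{Q. lam Q \<noteq> 0}. Q ^ lam Q)"

definition GS1_star :: "('a::field poly \<Rightarrow> 'g::linordered_ab_group_add option) \<Rightarrow> 'a poly set \<Rightarrow> bool" where
  "GS1_star \<nu> QS \<longleftrightarrow>
     (\<forall>f. \<exists>(r::nat) (a::nat \<Rightarrow> 'a) (lam::nat \<Rightarrow> 'a poly \<Rightarrow> nat).
        (\<forall>i<r. finite {Q. lam i Q \<noteq> 0} \<and> {Q. lam i Q \<noteq> 0} \<subseteq> QS) \<and>
        f = (\<Sum>i<r. smult (a i) (Qpow (lam i))) \<and>
        (\<forall>i<r. vle (\<nu> f) (\<nu> (smult (a i) (Qpow (lam i))))) \<and>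
        (\<forall>i<r. \<forall>Q. lam i Q \<noteq> 0 \<longrightarrow> degree Q \<le> degree f))"

end

theory Submission
  imports Defs
begin


lemma nsmul_0[simp]: "nsmul 0 a = 0" by (simp add: nsmul_def)
lemma nsmul_Suc: "nsmul (Suc n) a = a + nsmul n a" by (simp add: nsmul_def)
lemma nsmul_zero[simp]: "nsmul n 0 = 0" by (simp add: nsmul_def)
lemma nsmul_add: "nsmul n (a + b) = nsmul n a + nsmul n b"
  by (simp add: nsmul_def sum.distrib)
lemma nsmul_diff: "nsmul n (a - b) = nsmul n a - nsmul n b"
  by (simp add: nsmul_def sum_subtractf)
lemma nsmul_add_left: "nsmul (m + n) a = nsmul m a + nsmul n a"
  by (induction m) (simp_all add: nsmul_Suc algebra_simps)
lemma nsmul_mult: "nsmul (m * n) a = nsmul m (nsmul n a)"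
  by (induction m) (simp_all add: nsmul_Suc nsmul_add_left)
lemma nsmul_mono: "a \<le> b \<Longrightarrow> nsmul n a \<le> nsmul n (b::'g::linordered_ab_group_add)"
  by (induction n) (simp_all add: nsmul_Suc add_mono)
lemma nsmul_strict_mono: "a < b \<Longrightarrow> 0 < n \<Longrightarrow> nsmul n a < nsmul n (b::'g::linordered_ab_group_add)"
proof (induction n)
  case (Suc n) thus ?case
    by (cases n) (auto simp: nsmul_Suc intro: add_less_le_mono nsmul_mono less_imp_le)
qed simp
lemma nsmul_less_iff: "0 < n \<Longrightarrow> nsmul n a < nsmul n (b::'g::linordered_ab_group_add) \<longleftrightarrow> a < b"
  by (metis nsmul_mono nsmul_strict_mono not_le)
lemma nsmul_le_iff: "0 < n \<Longrightarrow> nsmul n a \<le> nsmul n (b::'g::linordered_ab_group_add) \<longleftrightarrow> a \<le> b"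
  by (metis nsmul_mono nsmul_strict_mono not_le)



section \<open>Hasse derivatives via substitution x := x + t\<close>

lemma map_poly_hom_add:
  assumes "h 0 = 0" "\<And>a b. h (a + b) = h a + h b"
  shows "map_poly h (p + q) = map_poly h p + map_poly h q"
  by (rule poly_eqI) (simp add: coeff_map_poly assms)

lemma map_poly_hom_smult:
  assumes "h 0 = 0" "\<And>a b. h (a * b) = h a * h b"
  shows "map_poly h (smult a q) = smult (h a) (map_poly h q)"
  by (rule poly_eqI) (simp add: coeff_map_poly assms)

lemma map_poly_hom_mult:
  fixes h :: "'a::comm_ring_1 \<Rightarrow> 'b::comm_ring_1"
  assumes "h 0 = 0" "\<And>a b. h (a + b) = h a + h b" "\<And>a b. h (a * b) = h a * h b"
  shows "map_poly h (p * q) = map_poly h p * map_poly h q"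
proof (induction p)
  case 0 then show ?case by simp
next
  case (pCons a p)
  have "map_poly h (pCons a p * q) = map_poly h (smult a q + pCons 0 (p * q))" by simp
  also have "\<dots> = smult (h a) (map_poly h q) + pCons 0 (map_poly h p * map_poly h q)"
    using pCons.IH by (simp add: map_poly_hom_add map_poly_hom_smult map_poly_pCons assms)
  also have "\<dots> = map_poly h (pCons a p) * map_poly h q"
    by (simp add: map_poly_pCons assms)
  finally show ?case .
qed

definition CC :: "'a::comm_ring_1 \<Rightarrow> 'a poly poly" where "CC c = [:[:c:]:]"

definition sX :: "'a::comm_ring_1 poly poly" where "sX = [: [:0,1:], 1 :]"

definition TT :: "'a::comm_ring_1 poly \<Rightarrow> 'a poly poly" where
  "TT f = poly (map_poly CC f) sX"

lemma CC_0[simp]: "CC 0 = 0" and CC_add: "CC (a + b) = CC a + CC b"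
  and CC_mult: "CC (a * b) = CC a * CC b" and CC_diff: "CC (a - b) = CC a - CC b"
  by (simp_all add: CC_def)

lemma TT_mult: "TT (f * g) = TT f * TT g"
  unfolding TT_def by (simp add: map_poly_hom_mult CC_add CC_mult)

lemma TT_add: "TT (f + g) = TT f + TT g"
  unfolding TT_def by (simp add: map_poly_hom_add CC_add)

lemma TT_diff: "TT (f - g) = TT f - TT g"
proof -
  have "map_poly CC (f - g) = map_poly CC f - map_poly CC g"
    by (rule poly_eqI) (simp add: coeff_map_poly CC_diff)
  thus ?thesis unfolding TT_def by simp
qed

lemma X_mult_monom: "[:0, 1:] * monom (c::'a::comm_ring_1) n = monom c (Suc n)"
  by (simp add: monom_Suc smult_1_left)

lemma coeff_sX_power: "coeff ((sX :: 'a::comm_ring_1 poly poly) ^ i) k = monom (of_nat (i choose k)) (i - k)"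
proof (induction i arbitrary: k)
  case 0 then show ?case by (cases k) (simp_all add: monom_0)
next
  case (Suc i)
  note IH = Suc.IH
  have eq: "(sX :: 'a poly poly) ^ Suc i = smult [:0,1:] (sX ^ i) + pCons 0 (sX ^ i)"
    by (simp add: sX_def)
  show ?case
  proof (cases k)
    case 0 then show ?thesis by (subst eq) (simp add: Suc.IH X_mult_monom monom_Suc)
  next
    case (Suc k')
    have "coeff ((sX :: 'a poly poly) ^ Suc i) k = monom (of_nat (i choose k)) (Suc (i - k)) + monom (of_nat (i choose k')) (i - k')"
      by (subst eq) (simp add: IH[of k'] IH[of "Suc k'"] X_mult_monom monom_Suc \<open>k = Suc k'\<close>)
    also have "\<dots> = monom (of_nat (Suc i choose k)) (Suc i - k)"
    proof (cases "k \<le> i")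
      case True
      then have "Suc (i - k) = i - k'" using Suc by simp
      then show ?thesis using Suc by (simp add: add_monom[symmetric] add.commute)
    next
      case False
      then have z: "i choose Suc k' = 0" using Suc by simp
      show ?thesis using Suc False by (simp add: z del: binomial_eq_0_iff)
    qed
    finally show ?thesis .
  qed
qed

lemma coeff_TT: "coeff (TT f) k = hasse_deriv k (f :: 'a::field poly)"
proof -
  have deg: "degree (map_poly CC f) = degree f"
    by (rule degree_map_poly) (simp add: CC_def)
  have "TT f = (\<Sum>i\<le>degree f. CC (coeff f i) * sX ^ i)"
    unfolding TT_def poly_altdef deg by (simp add: coeff_map_poly)
  then have "coeff (TT f) k = (\<Sum>i\<le>degree f. [:coeff f i:] * coeff (sX ^ i) k)"
    by (simp add: coeff_sum CC_def)
  also have "\<dots> = hasse_deriv k f"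
    unfolding hasse_deriv_def coeff_sX_power
    by (intro sum.cong refl) (simp add: smult_monom mult.commute)
  finally show ?thesis .
qed

lemma hasse_mult: "hasse_deriv k (f * g) = (\<Sum>i\<le>k. hasse_deriv i f * hasse_deriv (k - i) (g :: 'a::field poly))"
  by (simp add: coeff_TT[symmetric] TT_mult coeff_mult)

lemma hasse_diff: "hasse_deriv k (f - g) = hasse_deriv k f - hasse_deriv k (g :: 'a::field poly)"
  by (simp add: coeff_TT[symmetric] TT_diff)

lemma hasse_0: "hasse_deriv 0 f = f"
  by (simp add: hasse_deriv_def poly_as_sum_of_monoms)

lemma hasse_nz_le: "hasse_deriv k f \<noteq> 0 \<Longrightarrow> k \<le> degree f"
  unfolding hasse_deriv_def by (rule ccontr) (auto intro!: sum.neutral simp: binomial_eq_0)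

lemma hasse_top: "hasse_deriv (degree f) f = [:lead_coeff f:]"
proof -
  have "hasse_deriv (degree f) f = (\<Sum>i\<in>{degree f}. monom (of_nat (i choose degree f) * coeff f i) (i - degree f))"
    unfolding hasse_deriv_def by (rule sum.mono_neutral_right) (auto simp: binomial_eq_0)
  thus ?thesis by (simp add: monom_0)
qed



lemma hasse_deriv_0_right[simp]: "hasse_deriv k 0 = 0"
  by (simp add: hasse_deriv_def)

lemma double_zero_g: "a + a = 0 \<Longrightarrow> (a::'g::linordered_ab_group_add) = 0"
proof (rule ccontr)
  assume h: "a + a = 0" "a \<noteq> 0"
  show False
  proof (cases "a < 0")
    case True then have "a + a < 0 + 0" by (intro add_strict_mono)
    then show False using h by simp
  next
    case False then have "0 < a" using h by simp
    then have "0 + 0 < a + a" by (intro add_strict_mono)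
    then show False using h by simp
  qed
qed

locale valn =
  fixes \<nu> :: "'a::field poly \<Rightarrow> 'g::linordered_ab_group_add option"
  assumes val: "is_valuation \<nu>"
begin

definition v :: "'a poly \<Rightarrow> 'g" where "v f = the (\<nu> f)"

lemma nu_0[simp]: "\<nu> 0 = None" using val unfolding is_valuation_def by blast

lemma nu_eq: "f \<noteq> 0 \<Longrightarrow> \<nu> f = Some (v f)"
  using val unfolding is_valuation_def v_def by (cases "\<nu> f") auto

lemma v_mult: "f \<noteq> 0 \<Longrightarrow> g \<noteq> 0 \<Longrightarrow> v (f * g) = v f + v g"
proof -
  assume "f \<noteq> 0" "g \<noteq> 0"
  then have "f * g \<noteq> 0" by simp
  have "\<nu> (f * g) = vadd (\<nu> f) (\<nu> g)" using val unfolding is_valuation_def by blast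
  then show ?thesis using nu_eq[OF \<open>f \<noteq> 0\<close>] nu_eq[OF \<open>g \<noteq> 0\<close>] nu_eq[OF \<open>f * g \<noteq> 0\<close>]
    by (simp add: vadd_def)
qed

lemma v_add_ge:
  assumes "f + g \<noteq> 0" "f \<noteq> 0 \<Longrightarrow> c \<le> v f" "g \<noteq> 0 \<Longrightarrow> c \<le> v g"
  shows "c \<le> v (f + g)"
proof (cases "f = 0")
  case True then show ?thesis using assms by simp
next
  case f: False
  show ?thesis
  proof (cases "g = 0")
    case True then show ?thesis using assms by simp
  next
    case g: False
    have "vle (vmin (\<nu> f) (\<nu> g)) (\<nu> (f + g))" using val unfolding is_valuation_def by blast
    then have "min (v f) (v g) \<le> v (f + g)"
      using nu_eq[OF f] nu_eq[OF g] nu_eq[OF assms(1)]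
      by (auto simp: vmin_def vle_def split: if_splits)
    then show ?thesis using assms f g by (auto simp: min_def split: if_splits)
  qed
qed

lemma v_1[simp]: "v 1 = 0"
  using v_mult[of 1 1] by simp

lemma v_neg[simp]: "v (- f) = v f"
proof (cases "f = 0")
  case True then show ?thesis by simp
next
  case False
  have "v (-1) + v (-1) = 0" using v_mult[of "-1" "-1"] by simp
  then have "v (-1) = 0"
    by (rule double_zero_g)
  then show ?thesis using v_mult[of "-1" f] False by simp
qed

lemma v_diff_ge:
  assumes "f - g \<noteq> 0" "f \<noteq> 0 \<Longrightarrow> c \<le> v f" "g \<noteq> 0 \<Longrightarrow> c \<le> v g"
  shows "c \<le> v (f - g)"
  using v_add_ge[of f "-g" c] assms by simp

lemma v_sum_ge:
  assumes "finite A" "\<And>i. i \<in> A \<Longrightarrow> h i \<noteq> 0 \<Longrightarrow> c \<le> v (h i)"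
  shows "sum h A \<noteq> 0 \<Longrightarrow> c \<le> v (sum h A)"
  using assms
proof (induction A rule: finite_induct)
  case (insert x F)
  show ?case using insert by (auto intro!: v_add_ge)
qed simp

end



context valn begin

lemma key_lemma:
  assumes kp: "key_polynomial \<nu> Q"
    and f0: "f \<noteq> 0" and g0: "g \<noteq> 0"
    and df: "degree f < degree Q" and dg: "degree g < degree Q"
    and q0: "(f * g) div Q \<noteq> 0"
  shows "v (f * g) \<le> v ((f * g) div Q * Q)"
proof (rule ccontr)
  define D where "D = degree Q"
  have D1: "1 \<le> D" and lcQ: "lead_coeff Q = 1"
    using kp unfolding key_polynomial_def D_def by auto
  have Q0: "Q \<noteq> 0" using D1 D_def by auto
  define L :: nat where "L = fact D"
  have L0: "0 < L" unfolding L_def by simp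
  have Ldvd: "\<And>k. 1 \<le> k \<Longrightarrow> k \<le> D \<Longrightarrow> k dvd L" unfolding L_def by (simp add: dvd_fact)
  define Kset where "Kset = {k. 1 \<le> k \<and> k \<le> D \<and> hasse_deriv k Q \<noteq> 0}"
  have finK: "finite Kset" unfolding Kset_def by (rule finite_subset[of _ "{..D}"]) auto
  have DK: "D \<in> Kset" unfolding Kset_def using D1 hasse_top[of Q] lcQ D_def by simp
  define w where "w k = v Q - v (hasse_deriv k Q)" for k
  define E where "E = Max ((\<lambda>k. nsmul (L div k) (w k)) ` Kset)"
  have Lk: "\<And>k. k \<in> Kset \<Longrightarrow> L = k * (L div k)"
    using Ldvd unfolding Kset_def by auto
  have Q1: "nsmul L (w k) \<le> nsmul k E" if "k \<in> Kset" for k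
  proof -
    have "nsmul L (w k) = nsmul k (nsmul (L div k) (w k))"
      using Lk[OF that] nsmul_mult by metis
    also have "\<dots> \<le> nsmul k E"
      by (rule nsmul_mono) (use finK that in \<open>auto simp: E_def\<close>)
    finally show ?thesis .
  qed
  obtain k where kK: "k \<in> Kset" and Q2: "nsmul L (w k) = nsmul k E"
  proof -
    have "E \<in> (\<lambda>k. nsmul (L div k) (w k)) ` Kset"
      unfolding E_def using finK DK by (intro Max_in) auto
    then obtain k where "k \<in> Kset" "E = nsmul (L div k) (w k)" by auto
    then show ?thesis using that Lk nsmul_mult by metis
  qed
  have H: "nsmul L (v h - v (hasse_deriv j h)) < nsmul j E"
    if dh: "degree h < D" and j1: "1 \<le> j" and hj: "hasse_deriv j h \<noteq> 0" for h j
  proof -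
    have jd: "j \<le> degree h" using hasse_nz_le[OF hj] .
    have "\<not> eps_le \<nu> Q h"
    proof
      assume "eps_le \<nu> Q h"
      moreover have "1 \<le> degree h" using jd j1 by simp
      ultimately have "degree Q \<le> degree h" using kp unfolding key_polynomial_def by blast
      then show False using dh D_def by simp
    qed
    moreover have "(v h - v (hasse_deriv j h), j) \<in> eps_terms \<nu> h"
      unfolding eps_terms_def v_def using j1 jd hj by blast
    ultimately obtain p where p: "p \<in> eps_terms \<nu> Q" and np: "\<not> qle p (v h - v (hasse_deriv j h), j)"
      unfolding eps_le_def by blast
    from p obtain i where pi: "p = (w i, i)" and iK: "i \<in> Kset"
      unfolding eps_terms_def Kset_def w_def v_def D_def by auto
    define a where "a = v h - v (hasse_deriv j h)"
    have "nsmul i a < nsmul j (w i)" using np pi unfolding qle_def a_def by auto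
    then have "nsmul L (nsmul i a) < nsmul L (nsmul j (w i))"
      using L0 by (intro nsmul_strict_mono)
    also have "nsmul L (nsmul j (w i)) = nsmul j (nsmul L (w i))"
      by (metis nsmul_mult mult.commute)
    also have "\<dots> \<le> nsmul j (nsmul i E)" by (intro nsmul_mono Q1 iK)
    also have "\<dots> = nsmul i (nsmul j E)" by (metis nsmul_mult mult.commute)
    also have "nsmul L (nsmul i a) = nsmul i (nsmul L a)" by (metis nsmul_mult mult.commute)
    finally have "nsmul i (nsmul L a) < nsmul i (nsmul j E)" .
    moreover have "0 < i" using iK unfolding Kset_def by auto
    ultimately show ?thesis unfolding a_def by (simp add: nsmul_less_iff)
  qed
  have H': "nsmul L (v h - v (hasse_deriv j h)) \<le> nsmul j E"
    if dh: "degree h < D" and hj: "hasse_deriv j h \<noteq> 0" for h j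
  proof (cases "j = 0")
    case True then show ?thesis by (simp add: hasse_0)
  next
    case False then show ?thesis using H[OF dh _ hj] by (simp add: less_imp_le)
  qed
  define q where "q = (f * g) div Q"
  define r where "r = (f * g) mod Q"
  have fg0: "f * g \<noteq> 0" using f0 g0 by simp
  have qQ: "q * Q = f * g - r" unfolding q_def r_def by (metis add_diff_cancel_right' div_mult_mod_eq)
  have q0': "q \<noteq> 0" using q0 q_def by simp
  have dr: "degree r < D"
    using degree_mod_less[OF Q0, of "f * g"] D1 unfolding r_def D_def by auto
  have dq: "degree q < D"
  proof -
    have "degree (q * Q) = degree q + D" using q0' Q0 D_def by (simp add: degree_mult_eq)
    moreover have "degree (f * g - r) \<le> max (degree (f * g)) (degree r)" by (rule degree_diff_le_max)
    moreover have "degree (f * g) \<le> degree f + degree g" by (rule degree_mult_le)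
    ultimately show ?thesis using qQ df dg dr D_def by auto
  qed
  define V where "V = v (q * Q)"
  assume "\<not> v (f * g) \<le> v ((f * g) div Q * Q)"
  then have VL: "V < v (f * g)" unfolding V_def q_def by simp
  have Vqq: "V = v q + v Q" unfolding V_def using q0' Q0 by (simp add: v_mult)
  define T where "T = nsmul k E"
  define S where "S h \<longleftrightarrow> h = 0 \<or> nsmul L (V - v h) < T" for h
  have S_add: "S (a + b)" if "S a" "S b" for a b
  proof (cases "a + b = 0")
    case True then show ?thesis by (simp add: S_def)
  next
    case nz: False
    show ?thesis
    proof (cases "a = 0 \<or> b = 0")
      case True then show ?thesis using that by auto
    next
      case False
      then have a0: "a \<noteq> 0" and b0: "b \<noteq> 0" by auto
      have "min (v a) (v b) \<le> v (a + b)" using nz by (intro v_add_ge) auto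
      then have "V - v (a + b) \<le> V - min (v a) (v b)" by simp
      then have "nsmul L (V - v (a + b)) \<le> nsmul L (V - min (v a) (v b))" by (rule nsmul_mono)
      also have "\<dots> < T" using that a0 b0 unfolding S_def by (cases "v a \<le> v b") (auto simp: min_def)
      finally show ?thesis unfolding S_def by simp
    qed
  qed
  have S_neg: "S (- a)" if "S a" for a using that unfolding S_def by simp
  have S_diff: "S (a - b)" if "S a" "S b" for a b
    using S_add[OF that(1) S_neg[OF that(2)]] by simp
  have S_sum: "S (sum h A)" if "finite A" "\<And>i. i \<in> A \<Longrightarrow> S (h i)" for h and A :: "nat set"
  proof -
    have S0: "S 0" by (simp add: S_def)
    have "finite B \<Longrightarrow> (\<forall>i\<in>B. S (h i)) \<longrightarrow> S (sum h B)" for B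
      by (induct B rule: finite_induct) (use S0 S_add in auto)
    then show ?thesis using that by blast
  qed
  have k1: "1 \<le> k" and kD: "k \<le> D" and hkQ: "hasse_deriv k Q \<noteq> 0" using kK unfolding Kset_def by auto
  have S1: "S (hasse_deriv k (f * g))"
    unfolding hasse_mult
  proof (rule S_sum)
    fix i assume i: "i \<in> {..k}"
    show "S (hasse_deriv i f * hasse_deriv (k - i) g)"
    proof (cases "hasse_deriv i f = 0 \<or> hasse_deriv (k - i) g = 0")
      case True then show ?thesis by (auto simp: S_def)
    next
      case False
      then have a: "hasse_deriv i f \<noteq> 0" and b: "hasse_deriv (k - i) g \<noteq> 0" by auto
      have eq: "V - v (hasse_deriv i f * hasse_deriv (k - i) g)
          = (V - v (f * g)) + (v f - v (hasse_deriv i f)) + (v g - v (hasse_deriv (k - i) g))"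
        using a b f0 g0 by (simp add: v_mult algebra_simps)
      have "nsmul L (V - v (f * g)) < nsmul L 0" using VL L0 by (intro nsmul_strict_mono) auto
      moreover have "nsmul L (v f - v (hasse_deriv i f)) \<le> nsmul i E"
        using H' a df D_def by auto
      moreover have "nsmul L (v g - v (hasse_deriv (k - i) g)) \<le> nsmul (k - i) E"
        using H' b dg D_def by auto
      ultimately have "nsmul L (V - v (hasse_deriv i f * hasse_deriv (k - i) g)) < 0 + nsmul i E + nsmul (k - i) E"
        unfolding eq nsmul_add by (intro add_less_le_mono) auto
      also have "\<dots> = T" using i by (simp add: T_def nsmul_add_left[symmetric])
      finally show ?thesis unfolding S_def by simp
    qed
  qed simp
  have S2: "S (hasse_deriv k r)"
  proof (cases "hasse_deriv k r = 0")
    case True then show ?thesis by (simp add: S_def)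
  next
    case False
    then have r0: "r \<noteq> 0" by auto
    have r_eq: "r = f * g - q * Q" using qQ by simp
    have "V \<le> v r"
      unfolding r_eq using r0 VL unfolding r_eq V_def by (intro v_diff_ge) auto
    then have "nsmul L (V - v r) \<le> nsmul L 0" by (intro nsmul_mono) simp
    moreover have "nsmul L (v r - v (hasse_deriv k r)) < T"
      unfolding T_def using H[OF dr k1 False] .
    ultimately have "nsmul L (V - v r) + nsmul L (v r - v (hasse_deriv k r)) < 0 + T"
      by (intro add_le_less_mono) auto
    then show ?thesis unfolding S_def by (simp add: nsmul_add[symmetric])
  qed
  have S3: "S (hasse_deriv k (q * Q))"
    unfolding qQ hasse_diff using S1 S2 by (rule S_diff)
  define R where "R = (\<Sum>i\<in>{1..k}. hasse_deriv i q * hasse_deriv (k - i) Q)"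
  have split: "hasse_deriv k (q * Q) = q * hasse_deriv k Q + R"
  proof -
    have "{..k} = insert 0 {1..k}" by auto
    then show ?thesis unfolding hasse_mult R_def by (simp add: hasse_0)
  qed
  have SR: "S R"
    unfolding R_def
  proof (rule S_sum)
    fix i assume i: "i \<in> {1..k}"
    show "S (hasse_deriv i q * hasse_deriv (k - i) Q)"
    proof (cases "hasse_deriv i q = 0 \<or> hasse_deriv (k - i) Q = 0")
      case True then show ?thesis by (auto simp: S_def)
    next
      case False
      then have a: "hasse_deriv i q \<noteq> 0" and b: "hasse_deriv (k - i) Q \<noteq> 0" by auto
      have eq: "V - v (hasse_deriv i q * hasse_deriv (k - i) Q)
          = (v q - v (hasse_deriv i q)) + w (k - i)"
        using a b by (simp add: v_mult Vqq w_def algebra_simps)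
      have "nsmul L (v q - v (hasse_deriv i q)) < nsmul i E"
        using H[OF dq _ a] i by auto
      moreover have "nsmul L (w (k - i)) \<le> nsmul (k - i) E"
      proof (cases "k - i = 0")
        case True then show ?thesis by (simp add: w_def hasse_0)
      next
        case False
        then have "k - i \<in> Kset" using b kD unfolding Kset_def by auto
        then show ?thesis by (rule Q1)
      qed
      ultimately have "nsmul L (V - v (hasse_deriv i q * hasse_deriv (k - i) Q)) < nsmul i E + nsmul (k - i) E"
        unfolding eq nsmul_add by (intro add_less_le_mono) auto
      also have "\<dots> = T" using i by (simp add: T_def nsmul_add_left[symmetric])
      finally show ?thesis unfolding S_def by simp
    qed
  qed simp
  have "S (q * hasse_deriv k Q)"
    using S_diff[OF S3 SR] unfolding split by simp
  moreover have "q * hasse_deriv k Q \<noteq> 0" using q0' hkQ by simp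
  moreover have "V - v (q * hasse_deriv k Q) = w k"
    using q0' hkQ by (simp add: v_mult Vqq w_def)
  ultimately show False unfolding S_def T_def using Q2 by simp
qed

end



section \<open>Q-expansions\<close>

lemma qexp_0: "qexp_coeff Q f 0 = f mod Q" by (simp add: qexp_coeff_def)

lemma qexp_Suc: "qexp_coeff Q f (Suc i) = qexp_coeff Q (f div Q) i"
  by (simp add: qexp_coeff_def poly_div_mult_right)

lemma qexp_add: "qexp_coeff Q (f + g) i = qexp_coeff Q f i + qexp_coeff Q g i"
  by (simp add: qexp_coeff_def poly_div_add_left poly_mod_add_left)

lemma qexp_smult: "qexp_coeff Q (smult a f) i = smult a (qexp_coeff Q f i)"
  by (simp add: qexp_coeff_def div_smult_left mod_smult_left)

lemma qexp_zero[simp]: "qexp_coeff Q 0 i = 0" by (simp add: qexp_coeff_def)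

lemma qexp_shift0:
  assumes "degree b < degree Q"
  shows "qexp_coeff Q (b + Q * h) 0 = b"
  using assms by (simp add: qexp_0 poly_mod_add_left mod_poly_less)

lemma qexp_shiftS:
  assumes "degree b < degree Q"
  shows "qexp_coeff Q (b + Q * h) (Suc i) = qexp_coeff Q h i"
proof -
  have "Q \<noteq> 0" using assms by auto
  then have "(b + Q * h) div Q = h" using assms by (simp add: poly_div_add_left div_poly_less)
  then show ?thesis by (simp add: qexp_Suc)
qed

lemma qexp_deg: "Q \<noteq> 0 \<Longrightarrow> qexp_coeff Q f i \<noteq> 0 \<Longrightarrow> degree (qexp_coeff Q f i) < degree Q"
  unfolding qexp_coeff_def using degree_mod_less by blast

lemma qexp_mult_pow:
  assumes "1 \<le> degree Q"
  shows "qexp_coeff Q (h * Q ^ m) i = (if i < m then 0 else qexp_coeff Q h (i - m))"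
proof (induction m arbitrary: i)
  case 0 then show ?case by simp
next
  case (Suc m)
  have eq: "h * Q ^ Suc m = 0 + Q * (h * Q ^ m)" by (simp add: algebra_simps)
  show ?case
  proof (cases i)
    case 0
    have "qexp_coeff Q (h * Q ^ Suc m) 0 = 0"
      by (subst eq, rule qexp_shift0) (use assms in simp)
    then show ?thesis using 0 by simp
  next
    case (Suc i')
    have "qexp_coeff Q (h * Q ^ Suc m) (Suc i') = qexp_coeff Q (h * Q ^ m) i'"
      by (subst eq, rule qexp_shiftS) (use assms in simp)
    then show ?thesis using Suc.IH Suc by simp
  qed
qed

lemma qexp_expansion_aux:
  "f = (\<Sum>j<n. qexp_coeff Q f j * Q ^ j) + (f div Q ^ n) * Q ^ n"
proof (induction n)
  case 0 then show ?case by simp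
next
  case (Suc n)
  have a: "f div Q ^ Suc n = (f div Q ^ n) div Q" by (simp only: power_Suc2 poly_div_mult_right)
  have eq: "f div Q ^ n = (f div Q ^ n) mod Q + (f div Q ^ Suc n) * Q"
    unfolding a using div_mult_mod_eq[of "f div Q ^ n" Q] by (simp add: add.commute)
  have "(f div Q ^ n) * Q ^ n = ((f div Q ^ n) mod Q + (f div Q ^ Suc n) * Q) * Q ^ n"
    using arg_cong[OF eq, of "\<lambda>x. x * Q ^ n"] .
  also have "\<dots> = qexp_coeff Q f n * Q ^ n + (f div Q ^ Suc n) * Q ^ Suc n"
    by (simp add: qexp_coeff_def distrib_right power_Suc2 mult.assoc)
  finally have "(f div Q ^ n) * Q ^ n = qexp_coeff Q f n * Q ^ n + (f div Q ^ Suc n) * Q ^ Suc n" .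
  then show ?case using Suc.IH by (simp add: add.assoc)
qed

lemma degree_pow_ge: "1 \<le> degree (Q :: 'a::field poly) \<Longrightarrow> n \<le> degree (Q ^ n)"
proof -
  assume "1 \<le> degree Q"
  then have "Q \<noteq> 0" by auto
  then have "degree (Q ^ n) = n * degree Q" by (simp add: degree_power_eq)
  then show ?thesis using \<open>1 \<le> degree Q\<close> by simp
qed

lemma qexp_high:
  assumes "1 \<le> degree Q" "degree f < i"
  shows "qexp_coeff Q f i = 0"
proof -
  have "degree f < degree (Q ^ i)" using degree_pow_ge[OF assms(1), of i] assms(2) by simp
  then show ?thesis by (simp add: qexp_coeff_def div_poly_less)
qed

lemma qexp_expansion:
  assumes "1 \<le> degree Q"
  shows "f = (\<Sum>j\<le>degree f. qexp_coeff Q f j * Q ^ j)"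
proof -
  have "degree f < degree (Q ^ Suc (degree f))" using degree_pow_ge[OF assms, of "Suc (degree f)"] by simp
  then have "f div Q ^ Suc (degree f) = 0" by (simp add: div_poly_less)
  then show ?thesis using qexp_expansion_aux[where f=f and n="Suc (degree f)" and Q=Q] lessThan_Suc_atMost by simp
qed



context valn begin

definition LBQ :: "'a poly \<Rightarrow> 'g \<Rightarrow> 'a poly \<Rightarrow> bool" where
  "LBQ Q c h \<longleftrightarrow> (\<forall>i. qexp_coeff Q h i \<noteq> 0 \<longrightarrow> c \<le> v (qexp_coeff Q h i * Q ^ i))"

lemma LBQ_0: "LBQ Q c 0" by (simp add: LBQ_def)

lemma LBQ_mono: "LBQ Q c h \<Longrightarrow> c' \<le> c \<Longrightarrow> LBQ Q c' h"
  unfolding LBQ_def by (meson order_trans)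

lemma LBQ_add:
  assumes hf: "LBQ Q c f" and hg: "LBQ Q c g" and Q0: "Q \<noteq> 0" shows "LBQ Q c (f + g)"
  unfolding LBQ_def
proof (intro allI impI)
  fix i assume nz: "qexp_coeff Q (f + g) i \<noteq> 0"
  define a where "a = qexp_coeff Q f i"
  define b where "b = qexp_coeff Q g i"
  have eq: "qexp_coeff Q (f + g) i * Q ^ i = a * Q ^ i + b * Q ^ i"
    by (simp add: a_def b_def qexp_add distrib_right)
  show "c \<le> v (qexp_coeff Q (f + g) i * Q ^ i)"
    unfolding eq
  proof (rule v_add_ge)
    show "a * Q ^ i \<noteq> 0 \<Longrightarrow> c \<le> v (a * Q ^ i)" using hf unfolding LBQ_def a_def by auto
    show "b * Q ^ i \<noteq> 0 \<Longrightarrow> c \<le> v (b * Q ^ i)" using hg unfolding LBQ_def b_def by auto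
    show "a * Q ^ i + b * Q ^ i \<noteq> 0"
    proof
      assume "a * Q ^ i + b * Q ^ i = 0"
      then have "(a + b) * Q ^ i = 0" by (simp add: distrib_right)
      moreover have "Q \<noteq> 0" using Q0 .
      ultimately show False using nz by (simp add: a_def b_def qexp_add)
    qed
  qed
qed

lemma LBQ_sum: "Q \<noteq> 0 \<Longrightarrow> finite A \<Longrightarrow> (\<And>i. i \<in> A \<Longrightarrow> LBQ Q c (h i)) \<Longrightarrow> LBQ Q c (sum h A)"
proof -
  assume Q0: "Q \<noteq> 0"
  have "finite B \<Longrightarrow> (\<forall>i\<in>B. LBQ Q c (h i)) \<longrightarrow> LBQ Q c (sum h B)" for B
    by (induction B rule: finite_induct) (auto intro: LBQ_add[OF _ _ Q0] LBQ_0)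
  then show "finite A \<Longrightarrow> (\<And>i. i \<in> A \<Longrightarrow> LBQ Q c (h i)) \<Longrightarrow> LBQ Q c (sum h A)" by blast
qed

lemma LBQ_smult:
  assumes "a \<noteq> 0" "LBQ Q c h" "Q \<noteq> 0"
  shows "LBQ Q (v [:a:] + c) (smult a h)"
  unfolding LBQ_def
proof (intro allI impI)
  fix i assume nz: "qexp_coeff Q (smult a h) i \<noteq> 0"
  then have nz': "qexp_coeff Q h i \<noteq> 0" by (simp add: qexp_smult)
  have "Q \<noteq> 0" using assms(3) .
  have "qexp_coeff Q (smult a h) i * Q ^ i = [:a:] * (qexp_coeff Q h i * Q ^ i)"
    by (simp add: qexp_smult)
  moreover have "v ([:a:] * (qexp_coeff Q h i * Q ^ i)) = v [:a:] + v (qexp_coeff Q h i * Q ^ i)"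
    using assms(1) nz' \<open>Q \<noteq> 0\<close> by (intro v_mult) auto
  moreover have "c \<le> v (qexp_coeff Q h i * Q ^ i)" using assms(2) nz' unfolding LBQ_def by blast
  ultimately show "v [:a:] + c \<le> v (qexp_coeff Q (smult a h) i * Q ^ i)" by simp
qed

lemma deg_div_small:
  fixes b e Q :: "'a poly"
  assumes "degree b < degree Q" "degree e < degree Q" "(b * e) div Q \<noteq> 0"
  shows "degree ((b * e) div Q) < degree Q"
proof -
  define q where "q = (b * e) div Q"
  define r where "r = (b * e) mod Q"
  have Q0: "Q \<noteq> 0" using assms by auto
  have qQ: "q * Q = b * e - r" unfolding q_def r_def by (metis add_diff_cancel_right' div_mult_mod_eq)
  have dr: "degree r < degree Q"
    using degree_mod_less[OF Q0, of "b * e"] assms unfolding r_def by auto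
  have "degree (q * Q) = degree q + degree Q" using assms Q0 q_def by (simp add: degree_mult_eq)
  moreover have "degree (b * e - r) \<le> max (degree (b * e)) (degree r)" by (rule degree_diff_le_max)
  moreover have "degree (b * e) \<le> degree b + degree e" by (rule degree_mult_le)
  ultimately show ?thesis using qQ assms dr q_def by auto
qed

lemma LBQ_single:
  assumes kp: "key_polynomial \<nu> Q"
    and b0: "b \<noteq> 0" and e0: "e \<noteq> 0"
    and db: "degree b < degree Q" and de: "degree e < degree Q"
  shows "LBQ Q (v (b * e) + v (Q ^ m)) (b * e * Q ^ m)"
proof -
  have D1: "1 \<le> degree Q" using kp unfolding key_polynomial_def by auto
  have Q0: "Q \<noteq> 0" using D1 by auto
  define q where "q = (b * e) div Q"
  define r where "r = (b * e) mod Q"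
  have be: "b * e = r + Q * q" unfolding q_def r_def by (metis add.commute div_mult_mod_eq mult.commute)
  have dr: "degree r < degree Q"
    using degree_mod_less[OF Q0, of "b * e"] D1 unfolding r_def by auto
  have dq: "degree q < degree Q"
  proof (cases "q = 0")
    case True then show ?thesis using D1 by simp
  next
    case False then show ?thesis using deg_div_small[OF db de] q_def by simp
  qed
  have c0: "qexp_coeff Q (b * e) 0 = r" unfolding be by (rule qexp_shift0[OF dr])
  have c1: "qexp_coeff Q (b * e) 1 = q"
    unfolding be using qexp_shiftS[OF dr, of q 0] by (simp add: qexp_0 mod_poly_less[OF dq])
  have c2: "qexp_coeff Q (b * e) (Suc (Suc i)) = 0" for i
  proof -
    have "qexp_coeff Q (b * e) (Suc (Suc i)) = qexp_coeff Q q (Suc i)"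
      unfolding be by (rule qexp_shiftS[OF dr])
    also have "\<dots> = 0" unfolding qexp_Suc using div_poly_less[OF dq] by simp
    finally show ?thesis .
  qed
  have be0: "b * e \<noteq> 0" using b0 e0 by simp
  have vqQ: "v (b * e) \<le> v (q * Q)" if "q \<noteq> 0"
    using key_lemma[OF kp b0 e0 db de] that q_def by simp
  have vr: "v (b * e) \<le> v r" if "r \<noteq> 0"
  proof -
    have "r = b * e - q * Q" using be by (simp add: algebra_simps)
    then show ?thesis using that vqQ by (auto intro!: v_diff_ge)
  qed
  show ?thesis unfolding LBQ_def
  proof (intro allI impI)
    fix i assume nz: "qexp_coeff Q (b * e * Q ^ m) i \<noteq> 0"
    then have im: "\<not> i < m" and nz2: "qexp_coeff Q (b * e) (i - m) \<noteq> 0"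
      by (auto simp: qexp_mult_pow[OF D1] split: if_splits)
    have "i - m = 0 \<or> i - m = 1 \<or> (\<exists>j. i - m = Suc (Suc j))"
      by presburger
    then show "v (b * e) + v (Q ^ m) \<le> v (qexp_coeff Q (b * e * Q ^ m) i * Q ^ i)"
    proof (elim disjE exE)
      assume h: "i - m = 0"
      then have i: "i = m" using im by simp
      have "qexp_coeff Q (b * e * Q ^ m) i = r" using i c0 by (simp add: qexp_mult_pow[OF D1])
      moreover have "r \<noteq> 0" using nz2 h c0 by simp
      ultimately show ?thesis using vr Q0 i by (simp add: v_mult)
    next
      assume h: "i - m = 1"
      then have i: "i = Suc m" using im by simp
      have "qexp_coeff Q (b * e * Q ^ m) i = q" using i c1 by (simp add: qexp_mult_pow[OF D1])
      moreover have q0: "q \<noteq> 0" using nz2 h c1 by simp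
      moreover have "v (q * Q ^ Suc m) = v (q * Q) + v (Q ^ m)"
        using q0 Q0 by (simp add: v_mult mult.assoc)
      ultimately show ?thesis using vqQ i by simp
    next
      fix j assume "i - m = Suc (Suc j)"
      then show ?thesis using nz2 c2 by simp
    qed
  qed
qed

lemma LBQ_mult:
  assumes kp: "key_polynomial \<nu> Q"
    and h1: "LBQ Q c1 g1" and h2: "LBQ Q c2 g2"
  shows "LBQ Q (c1 + c2) (g1 * g2)"
proof -
  have D1: "1 \<le> degree Q" using kp unfolding key_polynomial_def by auto
  have Q0: "Q \<noteq> 0" using D1 by auto
  have "g1 * g2 = (\<Sum>i\<le>degree g1. qexp_coeff Q g1 i * Q ^ i) * (\<Sum>j\<le>degree g2. qexp_coeff Q g2 j * Q ^ j)"
    using qexp_expansion[OF D1, of g1] qexp_expansion[OF D1, of g2] by simp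
  also have "\<dots> = (\<Sum>i\<le>degree g1. \<Sum>j\<le>degree g2. (qexp_coeff Q g1 i * Q ^ i) * (qexp_coeff Q g2 j * Q ^ j))"
    by (rule sum_product)
  finally have eq: "g1 * g2 = \<dots>" .
  show ?thesis unfolding eq
  proof (intro LBQ_sum[OF Q0] finite_atMost)
    fix i j
    define b where "b = qexp_coeff Q g1 i"
    define e where "e = qexp_coeff Q g2 j"
    show "LBQ Q (c1 + c2) ((qexp_coeff Q g1 i * Q ^ i) * (qexp_coeff Q g2 j * Q ^ j))"
    proof (cases "b = 0 \<or> e = 0")
      case True then show ?thesis by (auto simp: b_def e_def LBQ_0)
    next
      case False
      then have b0: "b \<noteq> 0" and e0: "e \<noteq> 0" by auto
      have db: "degree b < degree Q" using qexp_deg[OF Q0] b0 b_def by simp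
      have de: "degree e < degree Q" using qexp_deg[OF Q0] e0 e_def by simp
      have "c1 \<le> v (b * Q ^ i)" using h1 b0 unfolding LBQ_def b_def by blast
      moreover have "c2 \<le> v (e * Q ^ j)" using h2 e0 unfolding LBQ_def e_def by blast
      ultimately have "c1 + c2 \<le> v (b * Q ^ i) + v (e * Q ^ j)" by (rule add_mono)
      also have "\<dots> = v (b * e) + v (Q ^ (i + j))"
        using b0 e0 Q0 by (simp add: v_mult power_add algebra_simps)
      finally have le: "c1 + c2 \<le> v (b * e) + v (Q ^ (i + j))" .
      have eqt: "(qexp_coeff Q g1 i * Q ^ i) * (qexp_coeff Q g2 j * Q ^ j) = b * e * Q ^ (i + j)"
        by (simp add: power_add algebra_simps b_def e_def)
      show ?thesis unfolding eqt
        using LBQ_mono[OF LBQ_single[OF kp b0 e0 db de, of "i + j"] le] .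
    qed
  qed
qed

lemma LBQ_one:
  assumes "1 \<le> degree Q" shows "LBQ Q 0 1"
proof -
  have "qexp_coeff Q 1 i = (if i = 0 then 1 else 0)" for i
  proof (cases i)
    case 0 then show ?thesis using assms by (simp add: qexp_0 mod_poly_less)
  next
    case (Suc i') then show ?thesis using assms by (simp add: qexp_Suc div_poly_less)
  qed
  then show ?thesis unfolding LBQ_def by simp
qed

lemma LBQ_pow:
  assumes kp: "key_polynomial \<nu> Q" and g0: "g \<noteq> 0" and h: "LBQ Q (v g) g"
  shows "LBQ Q (v (g ^ n)) (g ^ n)"
proof (induction n)
  case 0 then show ?case using LBQ_one kp unfolding key_polynomial_def by simp
next
  case (Suc n)
  have "LBQ Q (v g + v (g ^ n)) (g * g ^ n)" by (rule LBQ_mult[OF kp h Suc.IH])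
  then show ?case using g0 by (simp add: v_mult)
qed

lemma LBQ_prod:
  assumes kp: "key_polynomial \<nu> Q" and fin: "finite A"
    and hA: "\<And>P. P \<in> A \<Longrightarrow> P \<noteq> 0 \<and> LBQ Q (v P) P"
  shows "LBQ Q (v (\<Prod>P\<in>A. P ^ lam P)) (\<Prod>P\<in>A. P ^ lam P)"
  using fin hA
proof (induction A rule: finite_induct)
  case empty then show ?case using LBQ_one kp unfolding key_polynomial_def by simp
next
  case (insert x F)
  have x0: "x \<noteq> 0" and hx: "LBQ Q (v x) x" using insert by auto
  have F0: "(\<Prod>P\<in>F. P ^ lam P) \<noteq> 0" using insert by (auto simp: prod_zero_iff)
  have "LBQ Q (v (x ^ lam x) + v (\<Prod>P\<in>F. P ^ lam P)) (x ^ lam x * (\<Prod>P\<in>F. P ^ lam P))"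
    by (rule LBQ_mult[OF kp LBQ_pow[OF kp x0 hx] insert.IH]) (use insert in auto)
  then show ?case using insert x0 F0 by (simp add: v_mult)
qed

lemma LBQ_base_less:
  assumes "degree P < degree Q" shows "LBQ Q (v P) P"
proof -
  have "qexp_coeff Q P i = (if i = 0 then P else 0)" for i
  proof (cases i)
    case 0 then show ?thesis using assms by (simp add: qexp_0 mod_poly_less)
  next
    case (Suc i') then show ?thesis using assms by (simp add: qexp_Suc div_poly_less)
  qed
  then show ?thesis unfolding LBQ_def by simp
qed

lemma LBQ_base_eq:
  assumes D1: "1 \<le> degree Q" and dP: "degree P = degree Q"
    and mP: "lead_coeff P = 1" and mQ: "lead_coeff Q = 1" and vPQ: "v P \<le> v Q"
  shows "LBQ Q (v P) P"
proof -
  have Q0: "Q \<noteq> 0" using D1 by auto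
  have P0: "P \<noteq> 0" using D1 dP by auto
  have dd: "degree (P - Q) < degree Q"
  proof (cases "P - Q = 0")
    case True then show ?thesis using D1 by simp
  next
    case False
    have le: "degree (P - Q) \<le> degree Q" using degree_diff_le_max[of P Q] dP by simp
    have "coeff (P - Q) (degree Q) = 0" using mP mQ dP by simp
    then have "degree (P - Q) \<noteq> degree Q" using False leading_coeff_0_iff by metis
    then show ?thesis using le by simp
  qed
  have eqP: "P = (P - Q) + Q * 1" by simp
  have "qexp_coeff Q P i = (if i = 0 then P - Q else if i = 1 then 1 else 0)" for i
  proof (cases i)
    case 0
    have "qexp_coeff Q ((P - Q) + Q * 1) 0 = P - Q" by (rule qexp_shift0[OF dd])
    then show ?thesis using 0 by simp
  next
    case (Suc i')
    have "qexp_coeff Q ((P - Q) + Q * 1) (Suc i') = qexp_coeff Q 1 i'" by (rule qexp_shiftS[OF dd])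
    then have "qexp_coeff Q P i = qexp_coeff Q 1 i'" using Suc by simp
    also have "\<dots> = (if i' = 0 then 1 else 0)"
    proof (cases i')
      case 0 then show ?thesis using D1 by (simp add: qexp_0 mod_poly_less)
    next
      case (Suc i'') then show ?thesis using D1 by (simp add: qexp_Suc div_poly_less)
    qed
    finally show ?thesis using Suc by simp
  qed
  moreover have "P - Q \<noteq> 0 \<Longrightarrow> v P \<le> v (P - Q)"
    using vPQ by (intro v_diff_ge) auto
  ultimately show ?thesis unfolding LBQ_def using vPQ by auto
qed

lemma LBQ_nuQ:
  assumes D1: "1 \<le> degree Q" and f0: "f \<noteq> 0" and h: "LBQ Q (v f) f"
  shows "nu_Q \<nu> Q f = \<nu> f"
proof -
  define I where "I = {i. i \<le> degree f \<and> qexp_coeff Q f i \<noteq> 0}"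
  define M where "M = {the (\<nu> (qexp_coeff Q f i * Q ^ i)) | i. i \<le> degree f \<and> qexp_coeff Q f i \<noteq> 0}"
  have exp: "f = (\<Sum>j\<le>degree f. qexp_coeff Q f j * Q ^ j)" by (rule qexp_expansion[OF D1])
  have I0: "I \<noteq> {}"
  proof
    assume "I = {}"
    then have "(\<Sum>j\<le>degree f. qexp_coeff Q f j * Q ^ j) = 0" unfolding I_def by (intro sum.neutral) auto
    then show False using exp f0 by simp
  qed
  have M_eq: "M = (\<lambda>i. v (qexp_coeff Q f i * Q ^ i)) ` I" unfolding M_def I_def v_def by auto
  have finM: "finite M" unfolding M_eq I_def by auto
  have M0: "M \<noteq> {}" unfolding M_eq using I0 by auto
  have "v f \<le> Min M" using finM M0 h unfolding M_eq I_def LBQ_def by auto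
  moreover have "Min M \<le> v f"
  proof -
    have "Min M \<le> v (\<Sum>j\<le>degree f. qexp_coeff Q f j * Q ^ j)"
    proof (rule v_sum_ge)
      fix i assume i: "i \<in> {..degree f}" and nz: "qexp_coeff Q f i * Q ^ i \<noteq> 0"
      then have "i \<in> I" unfolding I_def by auto
      then show "Min M \<le> v (qexp_coeff Q f i * Q ^ i)" using finM unfolding M_eq by auto
    qed (use exp f0 in auto)
    then show ?thesis using exp by simp
  qed
  ultimately have "Min M = v f" by simp
  then show ?thesis using I0 f0 nu_eq[OF f0] unfolding nu_Q_def I_def M_def by simp
qed

end



lemma Qpow_sup:
  assumes "finite U" "{Q. lam Q \<noteq> 0} \<subseteq> U"
  shows "Qpow lam = (\<Prod>Q\<in>U. Q ^ lam Q)"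
  unfolding Qpow_def using assms by (intro prod.mono_neutral_left) auto

lemma Qpow_update:
  assumes fin: "finite {Q. lam Q \<noteq> 0}"
  shows "Qpow (lam(P := lam P + i)) = Qpow lam * P ^ i"
proof -
  define U where "U = insert P {Q. lam Q \<noteq> 0}"
  have fU: "finite U" using fin U_def by simp
  have "Qpow (lam(P := lam P + i)) = (\<Prod>Q\<in>U. Q ^ (lam(P := lam P + i)) Q)"
    by (rule Qpow_sup[OF fU]) (auto simp: U_def)
  also have "\<dots> = P ^ (lam P + i) * (\<Prod>Q\<in>U - {P}. Q ^ lam Q)"
    using fU by (subst prod.remove[of U P]) (auto simp: U_def intro!: prod.cong)
  also have "\<dots> = (P ^ lam P * (\<Prod>Q\<in>U - {P}. Q ^ lam Q)) * P ^ i"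
    by (simp add: power_add algebra_simps)
  also have "P ^ lam P * (\<Prod>Q\<in>U - {P}. Q ^ lam Q) = (\<Prod>Q\<in>U. Q ^ lam Q)"
    using fU by (subst prod.remove[of U P]) (auto simp: U_def)
  also have "\<dots> = Qpow lam" by (rule Qpow_sup[OF fU, symmetric]) (auto simp: U_def)
  finally show ?thesis .
qed

context valn begin

definition Gd :: "'a poly set \<Rightarrow> 'a poly \<Rightarrow> 'g \<Rightarrow> nat \<Rightarrow> bool" where
  "Gd QS f c d \<longleftrightarrow> (\<exists>xs. (\<forall>(a, lam)\<in>set xs. finite {Q. lam Q \<noteq> 0} \<and> {Q. lam Q \<noteq> 0} \<subseteq> QS \<and>
        (\<forall>Q. lam Q \<noteq> 0 \<longrightarrow> degree Q \<le> d) \<and>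
        (smult a (Qpow lam) \<noteq> 0 \<longrightarrow> c \<le> v (smult a (Qpow lam)))) \<and>
      f = sum_list (map (\<lambda>(a, lam). smult a (Qpow lam)) xs))"

lemma Gd_0: "Gd QS 0 c d"
  unfolding Gd_def by (rule exI[of _ "[]"]) simp

lemma Gd_add: "Gd QS f c d \<Longrightarrow> Gd QS g c d \<Longrightarrow> Gd QS (f + g) c d"
  unfolding Gd_def
proof (elim exE conjE)
  fix xs ys
  assume "\<forall>(a, lam)\<in>set xs. finite {Q. lam Q \<noteq> 0} \<and> {Q. lam Q \<noteq> 0} \<subseteq> QS \<and>
        (\<forall>Q. lam Q \<noteq> 0 \<longrightarrow> degree Q \<le> d) \<and> (smult a (Qpow lam) \<noteq> 0 \<longrightarrow> c \<le> v (smult a (Qpow lam)))"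
    "f = sum_list (map (\<lambda>(a, lam). smult a (Qpow lam)) xs)"
    "\<forall>(a, lam)\<in>set ys. finite {Q. lam Q \<noteq> 0} \<and> {Q. lam Q \<noteq> 0} \<subseteq> QS \<and>
        (\<forall>Q. lam Q \<noteq> 0 \<longrightarrow> degree Q \<le> d) \<and> (smult a (Qpow lam) \<noteq> 0 \<longrightarrow> c \<le> v (smult a (Qpow lam)))"
    "g = sum_list (map (\<lambda>(a, lam). smult a (Qpow lam)) ys)"
  then show "\<exists>zs. (\<forall>(a, lam)\<in>set zs. finite {Q. lam Q \<noteq> 0} \<and> {Q. lam Q \<noteq> 0} \<subseteq> QS \<and>
        (\<forall>Q. lam Q \<noteq> 0 \<longrightarrow> degree Q \<le> d) \<and> (smult a (Qpow lam) \<noteq> 0 \<longrightarrow> c \<le> v (smult a (Qpow lam)))) \<and>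
      f + g = sum_list (map (\<lambda>(a, lam). smult a (Qpow lam)) zs)"
    by (intro exI[of _ "xs @ ys"]) auto
qed

lemma Gd_sum: "finite A \<Longrightarrow> (\<And>i. i \<in> A \<Longrightarrow> Gd QS (h i) c d) \<Longrightarrow> Gd QS (sum h A) c d"
proof -
  have "finite B \<Longrightarrow> (\<forall>i\<in>B. Gd QS (h i) c d) \<longrightarrow> Gd QS (sum h B) c d" for B
    by (induction B rule: finite_induct) (auto intro: Gd_add Gd_0)
  then show "finite A \<Longrightarrow> (\<And>i. i \<in> A \<Longrightarrow> Gd QS (h i) c d) \<Longrightarrow> Gd QS (sum h A) c d" by blast
qed

lemma Gd_weaken:
  assumes G: "Gd QS f c d" and cc: "c' \<le> c" and dd: "d \<le> d'"
  shows "Gd QS f c' d'"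
proof -
  obtain xs where xs: "\<forall>(a, lam)\<in>set xs. finite {Q. lam Q \<noteq> 0} \<and> {Q. lam Q \<noteq> 0} \<subseteq> QS \<and>
        (\<forall>Q. lam Q \<noteq> 0 \<longrightarrow> degree Q \<le> d) \<and> (smult a (Qpow lam) \<noteq> 0 \<longrightarrow> c \<le> v (smult a (Qpow lam)))"
    and h: "f = sum_list (map (\<lambda>(a, lam). smult a (Qpow lam)) xs)"
    using G unfolding Gd_def by blast
  have "\<forall>(a, lam)\<in>set xs. finite {Q. lam Q \<noteq> 0} \<and> {Q. lam Q \<noteq> 0} \<subseteq> QS \<and>
        (\<forall>Q. lam Q \<noteq> 0 \<longrightarrow> degree Q \<le> d') \<and> (smult a (Qpow lam) \<noteq> 0 \<longrightarrow> c' \<le> v (smult a (Qpow lam)))"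
  proof (intro ballI, clarify)
    fix a lam assume "(a, lam) \<in> set xs"
    then have "finite {Q. lam Q \<noteq> 0} \<and> {Q. lam Q \<noteq> 0} \<subseteq> QS \<and>
        (\<forall>Q. lam Q \<noteq> 0 \<longrightarrow> degree Q \<le> d) \<and> (smult a (Qpow lam) \<noteq> 0 \<longrightarrow> c \<le> v (smult a (Qpow lam)))"
      using xs by blast
    then show "finite {Q. lam Q \<noteq> 0} \<and> {Q. lam Q \<noteq> 0} \<subseteq> QS \<and>
        (\<forall>Q. lam Q \<noteq> 0 \<longrightarrow> degree Q \<le> d') \<and> (smult a (Qpow lam) \<noteq> 0 \<longrightarrow> c' \<le> v (smult a (Qpow lam)))"
      using cc dd by (meson order_trans)
  qed
  then show ?thesis unfolding Gd_def using h by blast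
qed

lemma Gd_mult_pow:
  assumes G: "Gd QS h c d" and P: "P \<in> QS" and P0: "P \<noteq> 0"
  shows "Gd QS (h * P ^ i) (c + v (P ^ i)) (max d (degree P))"
proof -
  obtain xs where xs: "\<forall>(a, lam)\<in>set xs. finite {Q. lam Q \<noteq> 0} \<and> {Q. lam Q \<noteq> 0} \<subseteq> QS \<and>
        (\<forall>Q. lam Q \<noteq> 0 \<longrightarrow> degree Q \<le> d) \<and> (smult a (Qpow lam) \<noteq> 0 \<longrightarrow> c \<le> v (smult a (Qpow lam)))"
    and h: "h = sum_list (map (\<lambda>(a, lam). smult a (Qpow lam)) xs)"
    using G unfolding Gd_def by blast
  define ys where "ys = map (\<lambda>(a, lam). (a, lam(P := lam P + i))) xs"
  have termeq: "smult a (Qpow (lam(P := lam P + i))) = smult a (Qpow lam) * P ^ i"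
    if "(a, lam) \<in> set xs" for a lam
    using xs that by (auto simp: Qpow_update)
  have "h * P ^ i = sum_list (map (\<lambda>(a, lam). smult a (Qpow lam) * P ^ i) xs)"
    unfolding h by (induction xs) (auto simp: algebra_simps)
  also have "\<dots> = sum_list (map (\<lambda>(a, lam). smult a (Qpow lam)) ys)"
    unfolding ys_def using termeq by (induction xs) auto
  finally have eq: "h * P ^ i = \<dots>" .
  show ?thesis unfolding Gd_def
  proof (intro exI[of _ ys] conjI ballI eq)
    fix x assume "x \<in> set ys"
    then obtain a lam where al: "(a, lam) \<in> set xs" and x: "x = (a, lam(P := lam P + i))"
      unfolding ys_def by auto
    have fin: "finite {Q. lam Q \<noteq> 0}" and sub: "{Q. lam Q \<noteq> 0} \<subseteq> QS"
      and dg: "\<forall>Q. lam Q \<noteq> 0 \<longrightarrow> degree Q \<le> d"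
      and bd: "smult a (Qpow lam) \<noteq> 0 \<longrightarrow> c \<le> v (smult a (Qpow lam))"
      using xs al by auto
    have "{Q. (lam(P := lam P + i)) Q \<noteq> 0} \<subseteq> insert P {Q. lam Q \<noteq> 0}" by auto
    then have fin': "finite {Q. (lam(P := lam P + i)) Q \<noteq> 0}" using fin finite_subset by blast
    have sub': "{Q. (lam(P := lam P + i)) Q \<noteq> 0} \<subseteq> QS" using sub P by auto
    have dg': "\<forall>Q. (lam(P := lam P + i)) Q \<noteq> 0 \<longrightarrow> degree Q \<le> max d (degree P)"
      using dg by (auto simp: le_max_iff_disj)
    have bd': "c + v (P ^ i) \<le> v (smult a (Qpow (lam(P := lam P + i))))"
      if nz: "smult a (Qpow (lam(P := lam P + i))) \<noteq> 0"
    proof -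
      have nz1: "smult a (Qpow lam) \<noteq> 0" using nz termeq[OF al] by auto
      have "v (smult a (Qpow (lam(P := lam P + i)))) = v (smult a (Qpow lam)) + v (P ^ i)"
        unfolding termeq[OF al] using v_mult[of "smult a (Qpow lam)" "P ^ i"] nz1 P0 by simp
      then show ?thesis using bd nz1 by simp
    qed
    show "case x of (a, lam) \<Rightarrow> finite {Q. lam Q \<noteq> 0} \<and> {Q. lam Q \<noteq> 0} \<subseteq> QS \<and>
        (\<forall>Q. lam Q \<noteq> 0 \<longrightarrow> degree Q \<le> max d (degree P)) \<and>
        (smult a (Qpow lam) \<noteq> 0 \<longrightarrow> c + v (P ^ i) \<le> v (smult a (Qpow lam)))"
      unfolding x using fin' sub' dg' bd' by simp
  qed
qed

lemma complete_Gd: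
  assumes comp: "complete_set \<nu> QS" and kp: "\<forall>Q\<in>QS. key_polynomial \<nu> Q"
  shows "f \<noteq> 0 \<Longrightarrow> Gd QS f (v f) (degree f)"
proof (induction "degree f" arbitrary: f rule: less_induct)
  case less
  show ?case
  proof (cases "degree f = 0")
    case True
    have "Qpow (\<lambda>Q. 0) = 1" by (simp add: Qpow_def)
    moreover have "smult (coeff f 0) 1 = [:coeff f 0:]" by simp
    ultimately have "smult (coeff f 0) (Qpow (\<lambda>Q. 0)) = f" using degree_0_id[OF True] by metis
    then show ?thesis unfolding Gd_def
      by (intro exI[of _ "[(coeff f 0, \<lambda>Q. 0)]"]) auto
  next
    case False
    then have "1 \<le> degree f" by simp
    then obtain Q where QQ: "Q \<in> QS" and dQ: "degree Q \<le> degree f" and nQ: "nu_Q \<nu> Q f = \<nu> f"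
      using comp unfolding complete_set_def by blast
    have kQ: "key_polynomial \<nu> Q" using kp QQ by blast
    have D1: "1 \<le> degree Q" using kQ unfolding key_polynomial_def by auto
    have Q0: "Q \<noteq> 0" using D1 by auto
    define I where "I = {i. i \<le> degree f \<and> qexp_coeff Q f i \<noteq> 0}"
    have I0: "I \<noteq> {}" using nQ less.prems nu_eq[OF less.prems] unfolding nu_Q_def I_def by (auto split: if_splits)
    have bound: "v f \<le> v (qexp_coeff Q f i * Q ^ i)" if "i \<in> I" for i
    proof -
      have fin: "finite {the (\<nu> (qexp_coeff Q f i * Q ^ i)) | i. i \<le> degree f \<and> qexp_coeff Q f i \<noteq> 0}"
        by simp
      have "v f = Min {the (\<nu> (qexp_coeff Q f i * Q ^ i)) | i. i \<le> degree f \<and> qexp_coeff Q f i \<noteq> 0}"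
        using nQ I0 nu_eq[OF less.prems] unfolding nu_Q_def I_def by (auto split: if_splits)
      also have "\<dots> \<le> v (qexp_coeff Q f i * Q ^ i)"
        using that fin unfolding I_def v_def by (intro Min_le) auto
      finally show ?thesis .
    qed
    have exp: "f = (\<Sum>j\<le>degree f. qexp_coeff Q f j * Q ^ j)" by (rule qexp_expansion[OF D1])
    have "Gd QS (\<Sum>j\<le>degree f. qexp_coeff Q f j * Q ^ j) (v f) (degree f)"
    proof (rule Gd_sum)
      fix i assume i: "i \<in> {..degree f}"
      show "Gd QS (qexp_coeff Q f i * Q ^ i) (v f) (degree f)"
      proof (cases "qexp_coeff Q f i = 0")
        case True then show ?thesis by (simp add: Gd_0)
      next
        case False
        define b where "b = qexp_coeff Q f i"
        have b0: "b \<noteq> 0" using False b_def by simp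
        have db: "degree b < degree Q" using qexp_deg[OF Q0] b0 b_def by simp
        have IH: "Gd QS b (v b) (degree b)" using less.hyps[of b] db dQ b0 by simp
        have G2: "Gd QS (b * Q ^ i) (v b + v (Q ^ i)) (max (degree b) (degree Q))"
          by (rule Gd_mult_pow[OF IH QQ Q0])
        have "v f \<le> v b + v (Q ^ i)"
          using bound[of i] i False b0 Q0 unfolding I_def b_def by (simp add: v_mult)
        moreover have "max (degree b) (degree Q) \<le> degree f" using db dQ by simp
        ultimately show ?thesis using Gd_weaken[OF G2] b_def by simp
      qed
    qed simp
    then show ?thesis using exp by simp
  qed
qed

end



context valn begin

lemma complete_GS1:
  assumes comp: "complete_set \<nu> QS" and kp: "\<forall>Q\<in>QS. key_polynomial \<nu> Q"
  shows "GS1_star \<nu> QS"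
  unfolding GS1_star_def
proof
  fix f
  show "\<exists>(r::nat) (a::nat \<Rightarrow> 'a) (lam::nat \<Rightarrow> 'a poly \<Rightarrow> nat).
        (\<forall>i<r. finite {Q. lam i Q \<noteq> 0} \<and> {Q. lam i Q \<noteq> 0} \<subseteq> QS) \<and>
        f = (\<Sum>i<r. smult (a i) (Qpow (lam i))) \<and>
        (\<forall>i<r. vle (\<nu> f) (\<nu> (smult (a i) (Qpow (lam i))))) \<and>
        (\<forall>i<r. \<forall>Q. lam i Q \<noteq> 0 \<longrightarrow> degree Q \<le> degree f)"
  proof (cases "f = 0")
    case True then show ?thesis by (intro exI[of _ 0]) auto
  next
    case False
    obtain xs where xs: "\<forall>(a, lam)\<in>set xs. finite {Q. lam Q \<noteq> 0} \<and> {Q. lam Q \<noteq> 0} \<subseteq> QS \<and>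
        (\<forall>Q. lam Q \<noteq> 0 \<longrightarrow> degree Q \<le> degree f) \<and>
        (smult a (Qpow lam) \<noteq> 0 \<longrightarrow> v f \<le> v (smult a (Qpow lam)))"
      and h: "f = sum_list (map (\<lambda>(a, lam). smult a (Qpow lam)) xs)"
      using complete_Gd[OF comp kp False] unfolding Gd_def by blast
    define r where "r = length xs"
    define a where "a i = fst (xs ! i)" for i
    define lam where "lam i = snd (xs ! i)" for i
    have mem: "(a i, lam i) \<in> set xs" if "i < r" for i
      using that unfolding a_def lam_def r_def by simp
    have sumeq: "f = (\<Sum>i<r. smult (a i) (Qpow (lam i)))"
      unfolding h sum_list_sum_nth r_def a_def lam_def
      by (simp add: atLeast0LessThan case_prod_beta)
    have P: "finite {Q. lam i Q \<noteq> 0} \<and> {Q. lam i Q \<noteq> 0} \<subseteq> QS \<and>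
        (\<forall>Q. lam i Q \<noteq> 0 \<longrightarrow> degree Q \<le> degree f) \<and>
        (smult (a i) (Qpow (lam i)) \<noteq> 0 \<longrightarrow> v f \<le> v (smult (a i) (Qpow (lam i))))"
      if i: "i < r" for i
    proof -
      from xs mem[OF i] have "case (a i, lam i) of (a, lam) \<Rightarrow> finite {Q. lam Q \<noteq> 0} \<and> {Q. lam Q \<noteq> 0} \<subseteq> QS \<and>
        (\<forall>Q. lam Q \<noteq> 0 \<longrightarrow> degree Q \<le> degree f) \<and>
        (smult a (Qpow lam) \<noteq> 0 \<longrightarrow> v f \<le> v (smult a (Qpow lam)))" by (rule bspec)
      then show ?thesis by simp
    qed
    have V: "vle (\<nu> f) (\<nu> (smult (a i) (Qpow (lam i))))" if i: "i < r" for i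
    proof (cases "smult (a i) (Qpow (lam i)) = 0")
      case True then show ?thesis unfolding True by (simp add: vle_def)
    next
      case nz: False
      then show ?thesis using P[OF i] nu_eq[OF False] nu_eq[OF nz] by (simp add: vle_def)
    qed
    show ?thesis
    proof (intro exI[of _ r] exI[of _ a] exI[of _ lam] conjI sumeq)
      show "\<forall>i<r. finite {Q. lam i Q \<noteq> 0} \<and> {Q. lam i Q \<noteq> 0} \<subseteq> QS" using P by blast
      show "\<forall>i<r. vle (\<nu> f) (\<nu> (smult (a i) (Qpow (lam i))))" using V by blast
      show "\<forall>i<r. \<forall>Q. lam i Q \<noteq> 0 \<longrightarrow> degree Q \<le> degree f" using P by blast
    qed
  qed
qed

lemma GS1_complete:
  assumes gs: "GS1_star \<nu> QS" and kp: "\<forall>Q\<in>QS. key_polynomial \<nu> Q"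
  shows "complete_set \<nu> QS"
  unfolding complete_set_def
proof (intro allI impI)
  fix f :: "'a poly" assume df: "1 \<le> degree f"
  have f0: "f \<noteq> 0" using df by auto
  obtain r and a :: "nat \<Rightarrow> 'a" and lam :: "nat \<Rightarrow> 'a poly \<Rightarrow> nat" where
    fin: "\<forall>i<r. finite {Q. lam i Q \<noteq> 0} \<and> {Q. lam i Q \<noteq> 0} \<subseteq> QS"
    and feq: "f = (\<Sum>i<r. smult (a i) (Qpow (lam i)))"
    and vl: "\<forall>i<r. vle (\<nu> f) (\<nu> (smult (a i) (Qpow (lam i))))"
    and dl: "\<forall>i<r. \<forall>Q. lam i Q \<noteq> 0 \<longrightarrow> degree Q \<le> degree f"
    using gs unfolding GS1_star_def by blast
  define A where "A = (\<Union>i<r. {Q. lam i Q \<noteq> 0})"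
  have finA: "finite A" unfolding A_def using fin by auto
  have AQS: "A \<subseteq> QS" unfolding A_def using fin by auto
  have Adeg: "\<And>P. P \<in> A \<Longrightarrow> degree P \<le> degree f" unfolding A_def using dl by auto
  have Akp: "\<And>P. P \<in> A \<Longrightarrow> key_polynomial \<nu> P" using AQS kp by auto
  have Amon: "\<And>P. P \<in> A \<Longrightarrow> lead_coeff P = 1 \<and> 1 \<le> degree P"
    using Akp unfolding key_polynomial_def by auto
  have A0: "A \<noteq> {}"
  proof
    assume "A = {}"
    then have "\<And>i. i < r \<Longrightarrow> Qpow (lam i) = 1" unfolding A_def Qpow_def by auto
    then have "f = (\<Sum>i<r. [:a i:])" using feq by simp
    also have "\<dots> = [:\<Sum>i<r. a i:]" by (induction r) auto
    finally show False using df by simp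
  qed
  define d where "d = Max (degree ` A)"
  define B where "B = {P \<in> A. degree P = d}"
  have finB: "finite B" using finA B_def by simp
  have B0: "B \<noteq> {}"
  proof -
    have "d \<in> degree ` A" unfolding d_def using finA A0 by (intro Max_in) auto
    then show ?thesis unfolding B_def by auto
  qed
  obtain Q where QB: "Q \<in> B" and Qmax: "\<And>P. P \<in> B \<Longrightarrow> v P \<le> v Q"
  proof -
    have "Max (v ` B) \<in> v ` B" using finB B0 by (intro Max_in) auto
    then obtain Q where "Q \<in> B" "v Q = Max (v ` B)" by auto
    moreover have "\<And>P. P \<in> B \<Longrightarrow> v P \<le> Max (v ` B)" using finB by (intro Max_ge) auto
    ultimately show ?thesis using that by auto
  qed
  have QA: "Q \<in> A" and dQ: "degree Q = d" using QB B_def by auto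
  have kQ: "key_polynomial \<nu> Q" using Akp QA by blast
  have D1: "1 \<le> degree Q" and mQ: "lead_coeff Q = 1" using Amon QA by auto
  have Q0: "Q \<noteq> 0" using D1 by auto
  have dmax: "\<And>P. P \<in> A \<Longrightarrow> degree P \<le> d" unfolding d_def using finA by auto
  have baseP: "P \<noteq> 0 \<and> LBQ Q (v P) P" if "P \<in> A" for P
  proof -
    have "1 \<le> degree P" "lead_coeff P = 1" using Amon that by auto
    then have P0: "P \<noteq> 0" by auto
    show ?thesis
    proof (cases "degree P < degree Q")
      case True then show ?thesis using P0 LBQ_base_less by auto
    next
      case False
      then have "degree P = degree Q" using dmax[OF that] dQ by simp
      then have "P \<in> B" using that dQ B_def by auto
      then have "v P \<le> v Q" by (rule Qmax)
      then show ?thesis using P0 LBQ_base_eq[OF D1 \<open>degree P = degree Q\<close>] Amon[OF that] mQ by auto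
    qed
  qed
  have termLB: "LBQ Q (v f) (smult (a i) (Qpow (lam i)))" if i: "i < r" for i
  proof (cases "smult (a i) (Qpow (lam i)) = 0")
    case True show ?thesis unfolding True by (rule LBQ_0)
  next
    case nz: False
    then have a0: "a i \<noteq> 0" and qp0: "Qpow (lam i) \<noteq> 0" by auto
    have S: "{P. lam i P \<noteq> 0} \<subseteq> A" "finite {P. lam i P \<noteq> 0}" using i fin unfolding A_def by auto
    have "LBQ Q (v (Qpow (lam i))) (Qpow (lam i))"
      unfolding Qpow_def using baseP S by (intro LBQ_prod[OF kQ]) auto
    then have L1: "LBQ Q (v [:a i:] + v (Qpow (lam i))) (smult (a i) (Qpow (lam i)))"
      by (rule LBQ_smult[OF a0 _ Q0])
    have "v (smult (a i) (Qpow (lam i))) = v [:a i:] + v (Qpow (lam i))"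
      using v_mult[of "[:a i:]" "Qpow (lam i)"] a0 qp0 by simp
    moreover have "v f \<le> v (smult (a i) (Qpow (lam i)))"
      using vl i nu_eq[OF f0] nu_eq[OF nz] by (auto simp: vle_def)
    ultimately show ?thesis using LBQ_mono[OF L1] by simp
  qed
  have "LBQ Q (v f) (\<Sum>i<r. smult (a i) (Qpow (lam i)))"
    by (rule LBQ_sum[OF Q0]) (use termLB in auto)
  then have "LBQ Q (v f) f" by (simp only: feq[symmetric])
  then have "nu_Q \<nu> Q f = \<nu> f" by (rule LBQ_nuQ[OF D1 f0])
  moreover have "Q \<in> QS" using AQS QA by blast
  moreover have "degree Q \<le> degree f" using Adeg QA by blast
  ultimately show "\<exists>Q\<in>QS. degree Q \<le> degree f \<and> nu_Q \<nu> Q f = \<nu> f" by blast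
qed

end

theorem theorem1p2:
  fixes \<nu> :: "'a::field poly \<Rightarrow> 'g::linordered_ab_group_add option"
    and QS :: "'a poly set"
  assumes "is_valuation \<nu>"
    and "\<forall>Q\<in>QS. key_polynomial \<nu> Q"
  shows "complete_set \<nu> QS \<longleftrightarrow> GS1_star \<nu> QS"
proof -
  interpret valn \<nu> by (rule valn.intro[OF assms(1)])
  show ?thesis using complete_GS1 GS1_complete assms(2) by blast
qed


end
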